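(* Let $X$ be a real normed linear space, let $a_1,\ldots,a_{n+1}$ be affinely independent elements of $X$, let $\Sigma=\mathsf{co}\{a_1,\ldots,a_{n+1}\}$ be the $n$-simplex with these vertices, and let $c$ be a relative interior point of $\Sigma$. Then there exists $\delta>0$ such that whenever $x_1,\ldots,x_{n+1}\in\mathsf{aff}(\Sigma)$ satisfy $\|x_k-a_k\|<\delta$ for each $k\le n+1$, the points $x_1,\ldots,x_{n+1}$ are affinely independent and $c$ is a relative interior point of the $n$-simplex $\mathsf{co}\{x_1,\ldots,x_{n+1}\}$.
   Context: The setting is Bishop's constructive mathematics (intuitionistic logic); "there exists" means the object can be constructed. In a normed space, $x\neq y$ means $\|x-y\|>0$. Vectors $v_1,\ldots,v_n$ are linearly independent if $\sum_i\lambda_iv_i\neq 0$ (i.e. $\|\sum_i\lambda_iv_i\|>0$) whenever $\sum_i|\lambda_i|>0$. Points $a_1,\ldots,a_{n+1}$ are affinely independent if $a_k-a_{n+1}$ ($1\le k\le n$) are linearly independent. $\mathsf{aff}(S)$ is the set of affine combinations $\sum\lambda_ks_k$ ($s_k\in S$, $\sum\lambda_k=1$) and $\mathsf{co}(S)$ the set of convex combinations (additionally $\lambda_k\ge0$). The convex hull of $n+1$ affinely independent points is an $n$-simplex with those vertices. $B_X(x,r)=\{y\in X:\|y-x\|<r\}$. The relative interior of $S\subset X$ is $\mathsf{relint}(S)=\{x\in S:\exists r>0\,(B_X(x,r)\cap\mathsf{aff}(S)\subset S)\}$; its elements are relative interior points. *)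

theory Defs
  imports "HOL-Analysis.Analysis"
begin

definition lin_indep_fam :: "(nat \<Rightarrow> 'a::real_normed_vector) \<Rightarrow> nat \<Rightarrow> bool" where
  "lin_indep_fam v n \<longleftrightarrow>
     (\<forall>l::nat \<Rightarrow> real. (\<Sum>i\<in>{1..n}. \<bar>l i\<bar>) > 0 \<longrightarrow>
        norm (\<Sum>i\<in>{1..n}. l i *\<^sub>R v i) > 0)"

definition aff_indep_fam :: "(nat \<Rightarrow> 'a::real_normed_vector) \<Rightarrow> nat \<Rightarrow> bool" where
  "aff_indep_fam a n \<longleftrightarrow> lin_indep_fam (\<lambda>k. a k - a (Suc n)) n"

definition relint_pt :: "'a::real_normed_vector set \<Rightarrow> 'a \<Rightarrow> bool" where
  "relint_pt S x \<longleftrightarrow> x \<in> S \<and> (\<exists>r>0. ball x r \<inter> affine hull S \<subseteq> S)"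

end

theory Submission
  imports Defs
begin

lemma lin_bound:
  fixes v :: "nat \<Rightarrow> 'a::real_normed_vector"
  assumes li: "lin_indep_fam v n"
  shows "\<exists>m>0. \<forall>l. m * (\<Sum>i\<in>{1..n}. \<bar>l i\<bar>) \<le> norm (\<Sum>i\<in>{1..n}. l i *\<^sub>R v i)"
proof (cases "n = 0")
  case True then show ?thesis by (intro exI[of _ 1]) auto
next
  case False
  define K0 where "K0 = (PiE {1..n} (\<lambda>_. {-1..1::real}))"
  have "compactin (product_topology (\<lambda>_. euclideanreal) UNIV)
     (PiE UNIV (\<lambda>i. if i \<in> {1..n} then {-1..1} else {undefined}))"
    by (subst compactin_PiE) auto
  moreover have "PiE UNIV (\<lambda>i. if i \<in> {1..n} then {-1..1} else {undefined}) = K0"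
    unfolding K0_def by (auto simp: PiE_def extensional_def Pi_def split: if_splits)
  ultimately have cK0: "compact K0"
    by (metis compactin_euclidean_iff euclidean_product_topology)
  define K where "K = K0 \<inter> {l. (\<Sum>i\<in>{1..n}. \<bar>l i\<bar>) = 1}"
  have "closed {l::nat\<Rightarrow>real. (\<Sum>i\<in>{1..n}. \<bar>l i\<bar>) = 1}"
    by (intro closed_Collect_eq continuous_intros continuous_on_product_then_coordinatewise continuous_on_id)
  then have cK: "compact K" unfolding K_def using cK0 by (simp add: compact_Int_closed)
  define g where "g = (\<lambda>l::nat\<Rightarrow>real. norm (\<Sum>i\<in>{1..n}. l i *\<^sub>R v i))"
  have "continuous_on K g" unfolding g_def
    by (intro continuous_intros continuous_on_product_then_coordinatewise continuous_on_id)
  then have cg: "compact (g ` K)" using cK by (rule compact_continuous_image)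
  define l0 where "l0 = (\<lambda>i. if i = 1 then 1 else if i \<in> {1..n} then 0 else (undefined::real))"
  have "(\<Sum>i\<in>{1..n}. \<bar>l0 i\<bar>) = (\<Sum>i\<in>{1..n}. if i = 1 then 1 else 0)"
    by (rule sum.cong) (auto simp: l0_def)
  also have "\<dots> = 1" using False by (simp add: sum.delta)
  finally have "l0 \<in> K" unfolding K_def K0_def by (auto simp: l0_def)
  then have "g ` K \<noteq> {}" by auto
  with cg obtain s where s: "s \<in> g ` K" "\<forall>t\<in>g ` K. s \<le> t"
    using compact_attains_inf by blast
  then obtain l1 where l1: "l1 \<in> K" "s = g l1" by auto
  have spos: "s > 0" using li l1 unfolding lin_indep_fam_def K_def g_def by auto
  show ?thesis
  proof (intro exI[of _ s] conjI allI spos)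
    fix l :: "nat \<Rightarrow> real"
    define t where "t = (\<Sum>i\<in>{1..n}. \<bar>l i\<bar>)"
    show "s * t \<le> norm (\<Sum>i\<in>{1..n}. l i *\<^sub>R v i)"
    proof (cases "t = 0")
      case True then show ?thesis by simp
    next
      case False
      have tpos: "t > 0" using False unfolding t_def by (metis sum_abs_ge_zero order_le_less)
      define l' where "l' = restrict (\<lambda>i. l i / t) {1..n}"
      have le: "\<bar>l i\<bar> \<le> t" if "i \<in> {1..n}" for i
        unfolding t_def by (rule member_le_sum) (use that in auto)
      have "(\<Sum>i\<in>{1..n}. \<bar>l' i\<bar>) = (\<Sum>i\<in>{1..n}. \<bar>l i\<bar> / t)"
        by (rule sum.cong) (use tpos in \<open>simp_all add: l'_def abs_divide\<close>)
      also have "\<dots> = 1" using tpos by (simp add: sum_divide_distrib[symmetric] t_def)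
      moreover have "l' i \<in> {-1..1}" if "i \<in> {1..n}" for i
        using le[OF that] tpos that by (auto simp: l'_def divide_le_eq le_divide_eq abs_le_iff)
      ultimately have "l' \<in> K" unfolding K_def K0_def by (auto simp: l'_def)
      then have "s \<le> g l'" using s by auto
      also have "g l' = norm (\<Sum>i\<in>{1..n}. l i *\<^sub>R v i) / t"
      proof -
        have "(\<Sum>i\<in>{1..n}. l' i *\<^sub>R v i) = (1/t) *\<^sub>R (\<Sum>i\<in>{1..n}. l i *\<^sub>R v i)"
          by (simp add: scaleR_sum_right l'_def)
        then show ?thesis using tpos unfolding g_def by simp
      qed
      finally show ?thesis using tpos by (simp add: le_divide_eq mult.commute)
    qed
  qed
qed

lemma span_idx:
  assumes "finite I"
  shows "span (f ` I) = {\<Sum>i\<in>I. u i *\<^sub>R f i | u. True}"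
proof
  show "span (f ` I) \<subseteq> {\<Sum>i\<in>I. u i *\<^sub>R f i | u. True}"
  proof (rule span_minimal)
    show "f ` I \<subseteq> {\<Sum>i\<in>I. u i *\<^sub>R f i | u. True}"
    proof -
      have "f j \<in> {\<Sum>i\<in>I. u i *\<^sub>R f i | u. True}" if "j \<in> I" for j
      proof -
        have "(\<Sum>i\<in>I. (if i = j then 1 else 0) *\<^sub>R f i) = (\<Sum>i\<in>I. if i = j then f i else 0)"
          by (rule sum.cong) auto
        then have "f j = (\<Sum>i\<in>I. (if i = j then 1 else 0) *\<^sub>R f i)"
          using assms \<open>j \<in> I\<close> by (simp add: sum.delta)
        then show ?thesis unfolding mem_Collect_eq
          by (intro exI[where x="\<lambda>i. if i = j then 1 else 0"]) simp
      qed
      then show ?thesis by blast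
    qed
    show "subspace {\<Sum>i\<in>I. u i *\<^sub>R f i | u. True}"
      unfolding subspace_def
    proof (intro conjI ballI allI)
      show "0 \<in> {\<Sum>i\<in>I. u i *\<^sub>R f i | u. True}"
        by (rule CollectI, rule exI[of _ "\<lambda>_. 0"]) simp
      fix x y assume "x \<in> {\<Sum>i\<in>I. u i *\<^sub>R f i | u. True}" "y \<in> {\<Sum>i\<in>I. u i *\<^sub>R f i | u. True}"
      then obtain u1 u2 where "x = (\<Sum>i\<in>I. u1 i *\<^sub>R f i)" "y = (\<Sum>i\<in>I. u2 i *\<^sub>R f i)" by auto
      then have "x + y = (\<Sum>i\<in>I. (u1 i + u2 i) *\<^sub>R f i)"
        by (simp add: scaleR_add_left sum.distrib)
      then show "x + y \<in> {\<Sum>i\<in>I. u i *\<^sub>R f i | u. True}" unfolding mem_Collect_eq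
        by (intro exI[where x="\<lambda>i. u1 i + u2 i"]) simp
    next
      fix c x assume "x \<in> {\<Sum>i\<in>I. u i *\<^sub>R f i | u. True}"
      then obtain u1 where "x = (\<Sum>i\<in>I. u1 i *\<^sub>R f i)" by auto
      then have "c *\<^sub>R x = (\<Sum>i\<in>I. (c * u1 i) *\<^sub>R f i)"
        by (simp add: scaleR_sum_right)
      then show "c *\<^sub>R x \<in> {\<Sum>i\<in>I. u i *\<^sub>R f i | u. True}" unfolding mem_Collect_eq
        by (intro exI[where x="\<lambda>i. c * u1 i"]) simp
    qed
  qed
  show "{\<Sum>i\<in>I. u i *\<^sub>R f i | u. True} \<subseteq> span (f ` I)"
    by (auto intro!: span_sum span_scale intro: span_base)
qed

lemma lin_indep_unique:
  assumes li: "lin_indep_fam v n"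
    and eq: "(\<Sum>i\<in>{1..n}. l i *\<^sub>R v i) = (\<Sum>i\<in>{1..n}. l' i *\<^sub>R v i)"
    and i: "i \<in> {1..n}"
  shows "l i = l' i"
proof -
  have "(\<Sum>i\<in>{1..n}. (l i - l' i) *\<^sub>R v i) = 0"
    using eq by (simp add: scaleR_diff_left sum_subtractf)
  then have "\<not> (\<Sum>i\<in>{1..n}. \<bar>l i - l' i\<bar>) > 0"
    using li unfolding lin_indep_fam_def by (metis norm_zero less_irrefl)
  then have "(\<Sum>i\<in>{1..n}. \<bar>l i - l' i\<bar>) = 0"
    by (metis sum_abs_ge_zero order_le_less)
  then have "\<bar>l i - l' i\<bar> = 0" using i by (subst (asm) sum_nonneg_eq_0_iff) auto
  then show ?thesis by simp
qed

lemma lin_indep_inj: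
  assumes li: "lin_indep_fam v n"
  shows "inj_on v {1..n}"
proof (rule inj_onI)
  fix i j assume ij: "i \<in> {1..n}" "j \<in> {1..n}" "v i = v j"
  let ?l = "\<lambda>k. if k = i then 1 else 0 :: real"
  let ?l' = "\<lambda>k. if k = j then 1 else 0 :: real"
  have "(\<Sum>k\<in>{1..n}. ?l k *\<^sub>R v k) = (\<Sum>k\<in>{1..n}. ?l' k *\<^sub>R v k)"
  proof -
    have "(\<Sum>k\<in>{1..n}. ?l k *\<^sub>R v k) = (\<Sum>k\<in>{1..n}. if k = i then v k else 0)"
      by (rule sum.cong) auto
    also have "\<dots> = v i" using ij by (simp add: sum.delta)
    also have "\<dots> = (\<Sum>k\<in>{1..n}. if k = j then v k else 0)" using ij by (simp add: sum.delta)
    also have "\<dots> = (\<Sum>k\<in>{1..n}. ?l' k *\<^sub>R v k)"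
      by (rule sum.cong) auto
    finally show ?thesis .
  qed
  from lin_indep_unique[OF li this ij(1)] show "i = j" by (auto split: if_splits)
qed

lemma lin_indep_independent:
  assumes li: "lin_indep_fam v n"
  shows "independent (v ` {1..n})"
proof
  assume "dependent (v ` {1..n})"
  then obtain u where u: "\<exists>x\<in>v ` {1..n}. u x \<noteq> 0" "(\<Sum>x\<in>v ` {1..n}. u x *\<^sub>R x) = 0"
    using dependent_finite[of "v ` {1..n}"] by auto
  have inj: "inj_on v {1..n}" by (rule lin_indep_inj[OF li])
  have "(\<Sum>i\<in>{1..n}. u (v i) *\<^sub>R v i) = 0"
    using u(2) by (subst (asm) sum.reindex[OF inj]) (simp add: o_def)
  also have "\<dots> = (\<Sum>i\<in>{1..n}. 0 *\<^sub>R v i)" by simp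
  finally have E: "(\<Sum>i\<in>{1..n}. u (v i) *\<^sub>R v i) = (\<Sum>i\<in>{1..n}. 0 *\<^sub>R v i)" .
  obtain j where "j \<in> {1..n}" "u (v j) \<noteq> 0" using u(1) by auto
  moreover note lin_indep_unique[OF li E this(1)]
  ultimately show False by simp
qed

lemma aff_hull_repr:
  fixes x :: "nat \<Rightarrow> 'a::real_normed_vector"
  shows "affine hull (x ` {1..Suc n}) =
    {x (Suc n) + (\<Sum>i\<in>{1..n}. u i *\<^sub>R (x i - x (Suc n))) | u. True}"
proof -
  define p where "p = x (Suc n)"
  define D where "D = (\<lambda>y. -p + y) ` (x ` {1..Suc n} - {p})"
  define W where "W = (\<lambda>i. x i - p) ` {1..n}"
  have "p \<in> x ` {1..Suc n}" unfolding p_def by auto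
  then have A: "affine hull (x ` {1..Suc n}) = (\<lambda>y. p + y) ` span D"
    unfolding D_def by (rule affine_hull_span2)
  have "D \<subseteq> W"
  proof
    fix z assume "z \<in> D"
    then obtain y where y: "y \<in> x ` {1..Suc n}" "y \<noteq> p" "z = -p + y" unfolding D_def by blast
    then obtain k where "k \<in> {1..Suc n}" "y = x k" by blast
    with y have k: "k \<in> {1..Suc n}" "x k \<noteq> p" "z = x k - p" by auto
    then have "k \<noteq> Suc n" unfolding p_def by auto
    with k show "z \<in> W" unfolding W_def by (auto intro!: image_eqI[of _ _ k])
  qed
  moreover have "W \<subseteq> insert 0 D"
  proof
    fix z assume "z \<in> W"
    then obtain k where k: "k \<in> {1..n}" "z = x k - p" unfolding W_def by auto
    show "z \<in> insert 0 D"
    proof (cases "x k = p")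
      case True then show ?thesis using k by simp
    next
      case False then show ?thesis using k unfolding D_def
        by (auto intro!: image_eqI[of _ _ "x k"])
    qed
  qed
  ultimately have "span D = span W"
    by (metis span_insert_0 span_mono subset_antisym)
  also have "\<dots> = {\<Sum>i\<in>{1..n}. u i *\<^sub>R (x i - p) | u. True}"
    unfolding W_def by (rule span_idx) simp
  finally show ?thesis unfolding A p_def by auto
qed

lemma conv_hull_repr:
  fixes x :: "nat \<Rightarrow> 'a::real_normed_vector"
  shows "convex hull (x ` {1..Suc n}) =
    {x (Suc n) + (\<Sum>i\<in>{1..n}. u i *\<^sub>R (x i - x (Suc n))) | u.
       (\<forall>i\<in>{1..n}. 0 \<le> u i) \<and> (\<Sum>i\<in>{1..n}. u i) \<le> 1}" (is "_ = ?C")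
proof
  define p where "p = x (Suc n)"
  show "?C \<subseteq> convex hull (x ` {1..Suc n})"
  proof
    fix y assume "y \<in> ?C"
    then obtain u where u: "\<forall>i\<in>{1..n}. 0 \<le> u i" "(\<Sum>i\<in>{1..n}. u i) \<le> 1"
      "y = p + (\<Sum>i\<in>{1..n}. u i *\<^sub>R (x i - p))" unfolding p_def by auto
    define l where "l k = (if k = Suc n then 1 - (\<Sum>i\<in>{1..n}. u i) else u k)" for k
    have s1: "(\<Sum>k\<in>{1..n}. l k) = (\<Sum>k\<in>{1..n}. u k)"
      by (rule sum.cong) (auto simp: l_def)
    have s2: "(\<Sum>k\<in>{1..n}. l k *\<^sub>R x k) = (\<Sum>k\<in>{1..n}. u k *\<^sub>R x k)"
      by (rule sum.cong) (auto simp: l_def)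
    have "y = (\<Sum>k\<in>{1..Suc n}. l k *\<^sub>R x k)"
      using s2 unfolding u(3) by (simp add: l_def p_def scaleR_diff_right sum_subtractf
          scaleR_sum_left[symmetric] scaleR_diff_left algebra_simps)
    moreover have "convex (convex hull (x ` {1..Suc n}))" by simp
    moreover have "(\<Sum>k\<in>{1..Suc n}. l k) = 1" using s1 by (simp add: l_def)
    moreover have "\<forall>k\<in>{1..Suc n}. 0 \<le> l k" using u by (auto simp: l_def)
    moreover have "\<forall>k\<in>{1..Suc n}. x k \<in> convex hull (x ` {1..Suc n})"
      by (auto intro: hull_inc)
    ultimately show "y \<in> convex hull (x ` {1..Suc n})"
      using convex_sum[of "{1..Suc n}" "convex hull (x ` {1..Suc n})" l x] by simp
  qed
  show "convex hull (x ` {1..Suc n}) \<subseteq> ?C"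
  proof (rule hull_minimal)
    show "x ` {1..Suc n} \<subseteq> ?C"
    proof
      fix z assume "z \<in> x ` {1..Suc n}"
      then obtain k where k: "k \<in> {1..Suc n}" "z = x k" by auto
      show "z \<in> ?C"
      proof (cases "k = Suc n")
        case True
        then show ?thesis using k unfolding mem_Collect_eq
          by (intro exI[where x="\<lambda>_. 0"]) simp
      next
        case False
        then have kn: "k \<in> {1..n}" using k by auto
        have e1: "(\<Sum>i\<in>{1..n}. (if i = k then 1 else 0) *\<^sub>R (x i - x (Suc n))) =
            (\<Sum>i\<in>{1..n}. if i = k then x i - x (Suc n) else 0)"
          by (rule sum.cong) auto
        have e2: "(\<Sum>i\<in>{1..n}. (if i = k then 1 else 0::real)) = 1"
          using kn by (simp add: sum.delta)
        show ?thesis unfolding mem_Collect_eq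
          by (intro exI[where x="\<lambda>i. if i = k then 1 else 0"]) (use kn k e1 e2 in \<open>simp add: sum.delta\<close>)
      qed
    qed
    show "convex ?C"
      unfolding convex_def
    proof (intro ballI allI impI)
      fix y1 y2 and s t :: real
      assume y: "y1 \<in> ?C" "y2 \<in> ?C" and st: "0 \<le> s" "0 \<le> t" "s + t = 1"
      obtain u1 where u1: "\<forall>i\<in>{1..n}. 0 \<le> u1 i" "(\<Sum>i\<in>{1..n}. u1 i) \<le> 1"
        "y1 = x (Suc n) + (\<Sum>i\<in>{1..n}. u1 i *\<^sub>R (x i - x (Suc n)))" using y(1) by auto
      obtain u2 where u2: "\<forall>i\<in>{1..n}. 0 \<le> u2 i" "(\<Sum>i\<in>{1..n}. u2 i) \<le> 1"
        "y2 = x (Suc n) + (\<Sum>i\<in>{1..n}. u2 i *\<^sub>R (x i - x (Suc n)))" using y(2) by auto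
      have "s *\<^sub>R y1 + t *\<^sub>R y2 = (s + t) *\<^sub>R x (Suc n) +
         (\<Sum>i\<in>{1..n}. (s * u1 i + t * u2 i) *\<^sub>R (x i - x (Suc n)))"
      proof -
        have "(\<Sum>i\<in>{1..n}. (s * u1 i + t * u2 i) *\<^sub>R (x i - x (Suc n))) =
          s *\<^sub>R (\<Sum>i\<in>{1..n}. u1 i *\<^sub>R (x i - x (Suc n))) + t *\<^sub>R (\<Sum>i\<in>{1..n}. u2 i *\<^sub>R (x i - x (Suc n)))"
          by (simp add: scaleR_add_left sum.distrib scaleR_sum_right)
        then show ?thesis unfolding u1(3) u2(3) by (simp add: scaleR_add_right scaleR_add_left)
      qed
      also have "\<dots> = x (Suc n) + (\<Sum>i\<in>{1..n}. (s * u1 i + t * u2 i) *\<^sub>R (x i - x (Suc n)))"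
        using st by simp
      finally have eq: "s *\<^sub>R y1 + t *\<^sub>R y2 = \<dots>" .
      have nn: "\<forall>i\<in>{1..n}. 0 \<le> s * u1 i + t * u2 i" using u1 u2 st by auto
      have "(\<Sum>i\<in>{1..n}. s * u1 i + t * u2 i) = s * (\<Sum>i\<in>{1..n}. u1 i) + t * (\<Sum>i\<in>{1..n}. u2 i)"
        by (simp add: sum.distrib sum_distrib_left)
      also have "\<dots> \<le> s * 1 + t * 1"
        using u1(2) u2(2) st by (intro add_mono mult_left_mono) auto
      finally have le: "(\<Sum>i\<in>{1..n}. s * u1 i + t * u2 i) \<le> 1" using st by simp
      show "s *\<^sub>R y1 + t *\<^sub>R y2 \<in> ?C" unfolding mem_Collect_eq
        by (intro exI[where x="\<lambda>i. s * u1 i + t * u2 i"]) (use eq nn le in simp)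
    qed
  qed
qed

lemma alg1:
  fixes y xs P c as G E :: "'a::real_vector"
  assumes "y - xs = P" "c = as + G"
  shows "P - (G + E) = (y - c) - (xs - as) - E"
  using assms by (simp add: algebra_simps)

lemma alg2:
  fixes c as G :: "'a::real_vector"
  assumes "c = as + G"
  shows "as + (1 + t) *\<^sub>R G = c + t *\<^sub>R (c - as)"
  using assms by (simp add: algebra_simps)

lemma norm3:
  fixes a b e :: "'a::real_normed_vector"
  shows "norm (a - b - e) \<le> norm a + norm b + norm e"
  using norm_triangle_ineq4[of "a - b" e] norm_triangle_ineq4[of a b] by linarith

theorem theorem29:
  fixes a :: "nat \<Rightarrow> 'a::real_normed_vector" and n :: nat and c :: 'a
  assumes "aff_indep_fam a n"
    and "relint_pt (convex hull (a ` {1..Suc n})) c"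
  shows "\<exists>\<delta>>0. \<forall>x :: nat \<Rightarrow> 'a.
           (\<forall>k\<in>{1..Suc n}. x k \<in> affine hull (convex hull (a ` {1..Suc n})) \<and> norm (x k - a k) < \<delta>)
           \<longrightarrow> aff_indep_fam x n \<and> relint_pt (convex hull (x ` {1..Suc n})) c"
proof -
  define v where "v = (\<lambda>k. a k - a (Suc n))"
  have li: "lin_indep_fam v n" using assms(1) unfolding aff_indep_fam_def v_def .
  obtain m where m: "m > 0" "\<And>l. m * (\<Sum>i\<in>{1..n}. \<bar>l i\<bar>) \<le> norm (\<Sum>i\<in>{1..n}. l i *\<^sub>R v i)"
    using lin_bound[OF li] by blast
  define S where "S = convex hull (a ` {1..Suc n})"
  define A where "A = affine hull S"
  have A_eq: "A = {a (Suc n) + (\<Sum>i\<in>{1..n}. u i *\<^sub>R v i) | u. True}"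
    unfolding A_def S_def affine_hull_convex_hull aff_hull_repr v_def ..
  have S_eq: "S = {a (Suc n) + (\<Sum>i\<in>{1..n}. u i *\<^sub>R v i) | u.
       (\<forall>i\<in>{1..n}. 0 \<le> u i) \<and> (\<Sum>i\<in>{1..n}. u i) \<le> 1}"
    unfolding S_def conv_hull_repr v_def ..
  from assms(2) obtain \<rho> where cS: "c \<in> S" and \<rho>: "\<rho> > 0" "ball c \<rho> \<inter> A \<subseteq> S"
    unfolding relint_pt_def S_def A_def by blast
  obtain \<gamma> where \<gamma>: "\<forall>i\<in>{1..n}. 0 \<le> \<gamma> i" "(\<Sum>i\<in>{1..n}. \<gamma> i) \<le> 1"
    "c = a (Suc n) + (\<Sum>i\<in>{1..n}. \<gamma> i *\<^sub>R v i)"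
    using cS unfolding S_eq by blast
  have cA: "c \<in> A" unfolding A_def using cS by (simp add: hull_inc)
  have inS: "\<exists>u. (\<forall>i\<in>{1..n}. 0 \<le> u i) \<and> (\<Sum>i\<in>{1..n}. u i) \<le> 1 \<and>
      (\<forall>i\<in>{1..n}. u i = g i)"
    if "z = a (Suc n) + (\<Sum>i\<in>{1..n}. g i *\<^sub>R v i)" "dist c z < \<rho>" for z g
  proof -
    have "z \<in> A" unfolding A_eq using that(1) by blast
    moreover have "z \<in> ball c \<rho>" using that(2) by simp
    ultimately have "z \<in> S" using \<rho>(2) by blast
    then obtain u where u: "\<forall>i\<in>{1..n}. 0 \<le> u i" "(\<Sum>i\<in>{1..n}. u i) \<le> 1"
      "z = a (Suc n) + (\<Sum>i\<in>{1..n}. u i *\<^sub>R v i)" unfolding S_eq by blast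
    have "(\<Sum>i\<in>{1..n}. u i *\<^sub>R v i) = (\<Sum>i\<in>{1..n}. g i *\<^sub>R v i)"
      using u(3) that(1) by simp
    then have "\<forall>i\<in>{1..n}. u i = g i" using lin_indep_unique[OF li] by blast
    with u show ?thesis by blast
  qed
  have gpos: "\<forall>j\<in>{1..n}. \<gamma> j > 0"
  proof (rule ballI, rule ccontr)
    fix j assume j: "j \<in> {1..n}" "\<not> \<gamma> j > 0"
    then have gj: "\<gamma> j = 0" using \<gamma>(1) by force
    define t where "t = \<rho> / (2 * (norm (v j) + 1))"
    have tpos: "t > 0" unfolding t_def using \<rho> by (simp add: add_nonneg_pos)
    have "t * norm (v j) \<le> t * (norm (v j) + 1)" using tpos by simp
    also have "\<dots> = \<rho> / 2" unfolding t_def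
      using add_nonneg_pos[OF norm_ge_zero[of "v j"] zero_less_one] by (simp add: field_simps)
    finally have tlt: "t * norm (v j) < \<rho>" using \<rho> by simp
    define g where "g i = \<gamma> i - (if i = j then t else 0)" for i
    have "(\<Sum>i\<in>{1..n}. g i *\<^sub>R v i) = (\<Sum>i\<in>{1..n}. \<gamma> i *\<^sub>R v i) - (\<Sum>i\<in>{1..n}. (if i = j then t else 0) *\<^sub>R v i)"
      unfolding g_def by (simp add: scaleR_diff_left sum_subtractf)
    also have "(\<Sum>i\<in>{1..n}. (if i = j then t else 0) *\<^sub>R v i) = (\<Sum>i\<in>{1..n}. if i = j then t *\<^sub>R v i else 0)"
      by (rule sum.cong) auto
    also have "\<dots> = t *\<^sub>R v j" using j by (simp add: sum.delta)
    finally have "a (Suc n) + (\<Sum>i\<in>{1..n}. g i *\<^sub>R v i) = c - t *\<^sub>R v j"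
      using \<gamma>(3) by simp
    moreover have "dist c (c - t *\<^sub>R v j) < \<rho>" using tlt tpos by (simp add: dist_norm)
    ultimately obtain u where "\<forall>i\<in>{1..n}. 0 \<le> u i" "\<forall>i\<in>{1..n}. u i = g i"
      using inS by metis
    then have "0 \<le> g j" using j by auto
    then show False using gj tpos by (simp add: g_def)
  qed
  have gsum: "(\<Sum>i\<in>{1..n}. \<gamma> i) < 1"
  proof (rule ccontr)
    assume "\<not> (\<Sum>i\<in>{1..n}. \<gamma> i) < 1"
    then have g1: "(\<Sum>i\<in>{1..n}. \<gamma> i) \<ge> 1" by simp
    define e where "e = c - a (Suc n)"
    define t where "t = \<rho> / (2 * (norm e + 1))"
    have tpos: "t > 0" unfolding t_def using \<rho> by (simp add: add_nonneg_pos)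
    have "t * norm e \<le> t * (norm e + 1)" using tpos by simp
    also have "\<dots> = \<rho> / 2" unfolding t_def
      using add_nonneg_pos[OF norm_ge_zero[of e] zero_less_one] by (simp add: field_simps)
    finally have tlt: "t * norm e < \<rho>" using \<rho> by simp
    define g where "g i = (1 + t) * \<gamma> i" for i
    have "(\<Sum>i\<in>{1..n}. g i *\<^sub>R v i) = (1 + t) *\<^sub>R (\<Sum>i\<in>{1..n}. \<gamma> i *\<^sub>R v i)"
      unfolding g_def by (simp add: scaleR_sum_right)
    then have "a (Suc n) + (\<Sum>i\<in>{1..n}. g i *\<^sub>R v i) = c + t *\<^sub>R e"
      unfolding e_def using alg2[OF \<gamma>(3), of t] by simp
    moreover have "dist c (c + t *\<^sub>R e) < \<rho>" using tlt tpos by (simp add: dist_norm)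
    ultimately obtain u where u: "(\<Sum>i\<in>{1..n}. u i) \<le> 1" "\<forall>i\<in>{1..n}. u i = g i"
      using inS by metis
    have "(\<Sum>i\<in>{1..n}. u i) = (\<Sum>i\<in>{1..n}. g i)" using u(2) by simp
    also have "\<dots> = (1 + t) * (\<Sum>i\<in>{1..n}. \<gamma> i)" unfolding g_def by (simp add: sum_distrib_left)
    also have "\<dots> \<ge> (1 + t) * 1" using g1 tpos by (intro mult_left_mono) auto
    finally show False using u(1) tpos by simp
  qed
  define \<beta> where "\<beta> = Min (insert (1 - (\<Sum>i\<in>{1..n}. \<gamma> i)) (\<gamma> ` {1..n}))"
  have \<beta>pos: "\<beta> > 0" unfolding \<beta>_def using gpos gsum by (subst Min_gr_iff) auto
  have \<beta>g: "\<forall>j\<in>{1..n}. \<beta> \<le> \<gamma> j"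
  proof
    fix j assume "j \<in> {1..n}"
    then show "\<beta> \<le> \<gamma> j" unfolding \<beta>_def by (intro Min_le) auto
  qed
  have \<beta>s: "\<beta> \<le> 1 - (\<Sum>i\<in>{1..n}. \<gamma> i)" unfolding \<beta>_def by (intro Min_le) auto
  define \<delta> where "\<delta> = min (m / 4) (\<beta> * m / 16)"
  define r where "r = \<beta> * m / 8"
  have \<delta>pos: "\<delta> > 0" unfolding \<delta>_def using m(1) \<beta>pos by simp
  have rpos: "r > 0" unfolding r_def using m(1) \<beta>pos by simp
  show ?thesis
  proof (intro exI[of _ \<delta>] conjI allI impI \<delta>pos)
    fix x :: "nat \<Rightarrow> 'a"
    assume hx: "\<forall>k\<in>{1..Suc n}. x k \<in> affine hull (convex hull (a ` {1..Suc n})) \<and> norm (x k - a k) < \<delta>"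
    define w where "w = (\<lambda>k. x k - x (Suc n))"
    have xA: "x k \<in> A" and xa: "norm (x k - a k) < \<delta>" if "k \<in> {1..Suc n}" for k
      using hx that unfolding A_def S_def by auto
    have wv: "norm (w i - v i) < 2 * \<delta>" if "i \<in> {1..n}" for i
    proof -
      have "w i - v i = (x i - a i) - (x (Suc n) - a (Suc n))" unfolding w_def v_def by simp
      then have "norm (w i - v i) \<le> norm (x i - a i) + norm (x (Suc n) - a (Suc n))"
        by (metis norm_triangle_ineq4)
      also have "\<dots> < \<delta> + \<delta>" using xa[of i] xa[of "Suc n"] that by (intro add_strict_mono) auto
      finally show ?thesis by simp
    qed
    have wbound: "(m / 2) * (\<Sum>i\<in>{1..n}. \<bar>l i\<bar>) \<le> norm (\<Sum>i\<in>{1..n}. l i *\<^sub>R w i)" for l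
    proof -
      have "norm (\<Sum>i\<in>{1..n}. l i *\<^sub>R (v i - w i)) \<le> (\<Sum>i\<in>{1..n}. norm (l i *\<^sub>R (v i - w i)))"
        by (rule norm_sum)
      also have "\<dots> \<le> (\<Sum>i\<in>{1..n}. \<bar>l i\<bar> * (2 * \<delta>))"
      proof (rule sum_mono)
        fix i assume "i \<in> {1..n}"
        then show "norm (l i *\<^sub>R (v i - w i)) \<le> \<bar>l i\<bar> * (2 * \<delta>)"
          using wv[of i] by (simp add: norm_minus_commute mult_left_mono)
      qed
      also have "\<dots> = 2 * \<delta> * (\<Sum>i\<in>{1..n}. \<bar>l i\<bar>)" by (simp add: sum_distrib_left mult.commute)
      finally have n1: "norm (\<Sum>i\<in>{1..n}. l i *\<^sub>R (v i - w i)) \<le> 2 * \<delta> * (\<Sum>i\<in>{1..n}. \<bar>l i\<bar>)" .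
      have "(\<Sum>i\<in>{1..n}. l i *\<^sub>R v i) = (\<Sum>i\<in>{1..n}. l i *\<^sub>R w i) + (\<Sum>i\<in>{1..n}. l i *\<^sub>R (v i - w i))"
        by (simp add: scaleR_diff_right sum_subtractf)
      then have "norm (\<Sum>i\<in>{1..n}. l i *\<^sub>R v i) \<le> norm (\<Sum>i\<in>{1..n}. l i *\<^sub>R w i) + norm (\<Sum>i\<in>{1..n}. l i *\<^sub>R (v i - w i))"
        by (metis norm_triangle_ineq)
      moreover have "m * (\<Sum>i\<in>{1..n}. \<bar>l i\<bar>) \<le> norm (\<Sum>i\<in>{1..n}. l i *\<^sub>R v i)" by (rule m(2))
      moreover have "2 * \<delta> * (\<Sum>i\<in>{1..n}. \<bar>l i\<bar>) \<le> (m / 2) * (\<Sum>i\<in>{1..n}. \<bar>l i\<bar>)"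
        by (intro mult_right_mono) (auto simp: \<delta>_def sum_nonneg)
      ultimately show ?thesis using n1 by linarith
    qed
    have liw: "lin_indep_fam w n"
      unfolding lin_indep_fam_def
    proof (intro allI impI)
      fix l :: "nat \<Rightarrow> real" assume "(\<Sum>i\<in>{1..n}. \<bar>l i\<bar>) > 0"
      then have "(m / 2) * (\<Sum>i\<in>{1..n}. \<bar>l i\<bar>) > 0" using m(1) by simp
      then show "norm (\<Sum>i\<in>{1..n}. l i *\<^sub>R w i) > 0" using wbound[of l] by linarith
    qed
    then have ai: "aff_indep_fam x n" unfolding aff_indep_fam_def w_def .
    define V where "V = span (v ` {1..n})"
    have V_eq: "V = {\<Sum>i\<in>{1..n}. u i *\<^sub>R v i | u. True}" unfolding V_def by (rule span_idx) simp
    have AV: "y - a (Suc n) \<in> V" if "y \<in> A" for y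
      using that unfolding A_eq V_eq by auto
    have wV: "w ` {1..n} \<subseteq> V"
    proof
      fix z assume "z \<in> w ` {1..n}"
      then obtain i where i: "i \<in> {1..n}" "z = w i" by auto
      have "z = (x i - a (Suc n)) - (x (Suc n) - a (Suc n))" unfolding i w_def by simp
      moreover have "x i - a (Suc n) \<in> V" using AV xA i by auto
      moreover have "x (Suc n) - a (Suc n) \<in> V" using AV xA by auto
      ultimately show "z \<in> V" unfolding V_def by (metis span_diff)
    qed
    have VW: "V \<subseteq> span (w ` {1..n})"
    proof (rule ccontr)
      assume "\<not> V \<subseteq> span (w ` {1..n})"
      then obtain y where y: "y \<in> V" "y \<notin> span (w ` {1..n})" by blast
      have iw: "independent (w ` {1..n})" by (rule lin_indep_independent[OF liw])
      have yn: "y \<notin> w ` {1..n}" using y(2) span_base by blast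
      have ind: "independent (insert y (w ` {1..n}))"
        using iw y(2) yn by (simp add: independent_insert)
      have sub: "insert y (w ` {1..n}) \<subseteq> span (v ` {1..n})" using y(1) wV unfolding V_def by blast
      have "card (insert y (w ` {1..n})) \<le> card (v ` {1..n})"
        using independent_span_bound[OF _ ind sub] by simp
      also have "\<dots> \<le> n" using card_image_le[of "{1..n}" v] by simp
      finally have le: "card (insert y (w ` {1..n})) \<le> n" .
      have "card (w ` {1..n}) = n" using card_image[OF lin_indep_inj[OF liw]] by simp
      then have "card (insert y (w ` {1..n})) = Suc n" using yn by simp
      with le show False by simp
    qed
    have key: "ball c r \<inter> A \<subseteq> convex hull (x ` {1..Suc n})"
    proof
      fix y assume y: "y \<in> ball c r \<inter> A"
      have "y - x (Suc n) = (y - a (Suc n)) - (x (Suc n) - a (Suc n))" by simp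
      moreover have "y - a (Suc n) \<in> V" using AV y by auto
      moreover have "x (Suc n) - a (Suc n) \<in> V" using AV xA by auto
      ultimately have "y - x (Suc n) \<in> V" unfolding V_def by (metis span_diff)
      then have "y - x (Suc n) \<in> span (w ` {1..n})" using VW by blast
      then obtain \<mu> where \<mu>: "y - x (Suc n) = (\<Sum>i\<in>{1..n}. \<mu> i *\<^sub>R w i)"
        using span_idx[of "{1..n}" w] by auto
      define d where "d i = \<mu> i - \<gamma> i" for i
      have D1: "(\<Sum>i\<in>{1..n}. d i *\<^sub>R w i) = (\<Sum>i\<in>{1..n}. \<mu> i *\<^sub>R w i) - (\<Sum>i\<in>{1..n}. \<gamma> i *\<^sub>R w i)"
        unfolding d_def by (simp add: scaleR_diff_left sum_subtractf)
      have D2: "(\<Sum>i\<in>{1..n}. \<gamma> i *\<^sub>R w i) = (\<Sum>i\<in>{1..n}. \<gamma> i *\<^sub>R v i) + (\<Sum>i\<in>{1..n}. \<gamma> i *\<^sub>R (w i - v i))"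
        by (simp add: scaleR_diff_right sum_subtractf)
      have "(\<Sum>i\<in>{1..n}. d i *\<^sub>R w i) = (y - c) - (x (Suc n) - a (Suc n)) - (\<Sum>i\<in>{1..n}. \<gamma> i *\<^sub>R (w i - v i))"
        unfolding D1 D2 by (rule alg1[OF \<mu> \<gamma>(3)])
      then have "norm (\<Sum>i\<in>{1..n}. d i *\<^sub>R w i) \<le> norm (y - c) + norm (x (Suc n) - a (Suc n)) + norm (\<Sum>i\<in>{1..n}. \<gamma> i *\<^sub>R (w i - v i))"
        by (metis norm3)
      moreover have "norm (y - c) < r" using y by (simp add: dist_norm norm_minus_commute)
      moreover have "norm (x (Suc n) - a (Suc n)) < \<delta>" using xa by simp
      moreover have "norm (\<Sum>i\<in>{1..n}. \<gamma> i *\<^sub>R (w i - v i)) \<le> 2 * \<delta>"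
      proof -
        have "norm (\<Sum>i\<in>{1..n}. \<gamma> i *\<^sub>R (w i - v i)) \<le> (\<Sum>i\<in>{1..n}. norm (\<gamma> i *\<^sub>R (w i - v i)))"
          by (rule norm_sum)
        also have "\<dots> \<le> (\<Sum>i\<in>{1..n}. \<gamma> i * (2 * \<delta>))"
        proof (rule sum_mono)
          fix i assume i: "i \<in> {1..n}"
          then show "norm (\<gamma> i *\<^sub>R (w i - v i)) \<le> \<gamma> i * (2 * \<delta>)"
            using wv[of i] \<gamma>(1) by (simp add: mult_left_mono)
        qed
        also have "\<dots> = 2 * \<delta> * (\<Sum>i\<in>{1..n}. \<gamma> i)" by (simp add: sum_distrib_left mult.commute)
        also have "\<dots> \<le> 2 * \<delta> * 1" using \<gamma>(2) \<delta>pos by (intro mult_left_mono) auto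
        finally show ?thesis by simp
      qed
      ultimately have "norm (\<Sum>i\<in>{1..n}. d i *\<^sub>R w i) < r + 3 * \<delta>" by linarith
      also have "r + 3 * \<delta> \<le> 5 * \<beta> * m / 16" unfolding r_def \<delta>_def by simp
      finally have "(m / 2) * (\<Sum>i\<in>{1..n}. \<bar>d i\<bar>) < 5 * \<beta> * m / 16" using wbound[of d] by linarith
      then have "(m / 2) * (\<Sum>i\<in>{1..n}. \<bar>d i\<bar>) < (m / 2) * \<beta>" using m(1) \<beta>pos by simp
      then have dsum: "(\<Sum>i\<in>{1..n}. \<bar>d i\<bar>) < \<beta>" using m(1) by simp
      have mupos: "\<forall>i\<in>{1..n}. 0 \<le> \<mu> i"
      proof
        fix i assume i: "i \<in> {1..n}"
        have "\<bar>d i\<bar> \<le> (\<Sum>i\<in>{1..n}. \<bar>d i\<bar>)" by (rule member_le_sum) (use i in auto)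
        then show "0 \<le> \<mu> i" using dsum \<beta>g i unfolding d_def by fastforce
      qed
      have "(\<Sum>i\<in>{1..n}. \<mu> i) = (\<Sum>i\<in>{1..n}. \<gamma> i) + (\<Sum>i\<in>{1..n}. d i)"
        unfolding d_def by (simp add: sum_subtractf)
      also have "(\<Sum>i\<in>{1..n}. d i) \<le> (\<Sum>i\<in>{1..n}. \<bar>d i\<bar>)" by (rule sum_mono) simp
      finally have musum: "(\<Sum>i\<in>{1..n}. \<mu> i) \<le> 1" using dsum \<beta>s by linarith
      have "y = x (Suc n) + (y - x (Suc n))" by simp
      also have "\<dots> = x (Suc n) + (\<Sum>i\<in>{1..n}. \<mu> i *\<^sub>R (x i - x (Suc n)))"
        unfolding \<mu> w_def ..
      finally have "y = x (Suc n) + (\<Sum>i\<in>{1..n}. \<mu> i *\<^sub>R (x i - x (Suc n)))" .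
      then show "y \<in> convex hull (x ` {1..Suc n})"
        unfolding conv_hull_repr using mupos musum by blast
    qed
    have cx: "c \<in> convex hull (x ` {1..Suc n})" using key cA rpos by auto
    have "affine hull (convex hull (x ` {1..Suc n})) \<subseteq> A"
      unfolding affine_hull_convex_hull A_def
      by (rule hull_minimal) (use xA in \<open>auto simp: A_def\<close>)
    then have "ball c r \<inter> affine hull (convex hull (x ` {1..Suc n})) \<subseteq> convex hull (x ` {1..Suc n})"
      using key by blast
    then show "relint_pt (convex hull (x ` {1..Suc n})) c"
      unfolding relint_pt_def using cx rpos by blast
    show "aff_indep_fam x n" by (rule ai)
  qed
qed

end
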